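(* Let $(\mathbb T,o)\in\mathcal T$ and consider the TASEP on $\mathbb T$ started from the all-empty configuration, where $n$ particles are generated at the root according to an arbitrary rule. Assume (UE) holds with some $\varepsilon>0$. Then for all $m\in\mathbb N$, $$P_{\mathbb T}\big(z^m_i\ne z^m_j\ \text{for all }i,j\in\{1,\dots,n\},\,i\ne j\big)\ge1-n^2\Big(\frac1{1+\varepsilon}\Big)^{F_n(m)},$$ where $$F_n(m):=\begin{cases}\min\{F(o,x):x\in\mathcal Z_m\}-n,& d_{\mathbb T}=1,\\ m-\lceil n(d_{\mathbb T}-1)^{-1}\rceil,& d_{\mathbb T}\ge2.\end{cases}$$
   Context: $\mathcal T$: infinite, locally finite rooted trees $\mathbb T=(V,E,o)$ with edges directed from parent to child; $\mathcal Z_m$ the $m$-th generation. TASEP: a particle at $x$ jumps to a child $y$ at rate $r_{x,y}$ if $y$ is empty (positive, uniformly bounded rates); $P_{\mathbb T}$ its law. (UE): $r_{x,y}/r_{x,z}\ge\varepsilon$ for all $(x,y),(x,z)\in E$, some $\varepsilon\in(0,1]$. $z^m_i\in\mathcal Z_m$ is the unique site of generation $m$ visited by the $i$-th particle to enter the tree. $[o,x]$ is the set of vertices on the path from $o$ to $x$; $F(o,x):=|\{z\in[o,x]\setminus\{x\}:\deg(z)\ge3\}|$, where $\deg$ is the degree in the (undirected) tree. $d_{\mathbb T}$ is the smallest number of children of a vertex of $\mathbb T$. *)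

theory Defs
  imports "HOL-Probability.Probability"
begin

definition children :: "('v \<times> 'v) set \<Rightarrow> 'v \<Rightarrow> 'v set" where
  "children E x = {y. (x, y) \<in> E}"

definition rooted_tree :: "'v set \<Rightarrow> ('v \<times> 'v) set \<Rightarrow> 'v \<Rightarrow> bool" where
  "rooted_tree V E rt \<longleftrightarrow>
     rt \<in> V \<and> E \<subseteq> V \<times> V \<and> (\<forall>x. (x, rt) \<notin> E) \<and>
     (\<forall>y\<in>V - {rt}. \<exists>!x. (x, y) \<in> E) \<and>
     (\<forall>y\<in>V. (rt, y) \<in> E\<^sup>*) \<and>
     (\<forall>x\<in>V. finite (children E x)) \<and> infinite V"

definition Zgen :: "('v \<times> 'v) set \<Rightarrow> 'v \<Rightarrow> nat \<Rightarrow> 'v set" where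
  "Zgen E rt m = {x. (rt, x) \<in> E ^^ m}"

definition path_set :: "('v \<times> 'v) set \<Rightarrow> 'v \<Rightarrow> 'v \<Rightarrow> 'v set" where
  "path_set E rt x = {z. (rt, z) \<in> E\<^sup>* \<and> (z, x) \<in> E\<^sup>*}"

text \<open>Degree in the undirected tree.\<close>
definition udeg :: "('v \<times> 'v) set \<Rightarrow> 'v \<Rightarrow> 'v \<Rightarrow> nat" where
  "udeg E rt z = card (children E z) + (if z = rt then 0 else 1)"

definition Fbr :: "('v \<times> 'v) set \<Rightarrow> 'v \<Rightarrow> 'v \<Rightarrow> nat" where
  "Fbr E rt x = card {z \<in> path_set E rt x. z \<noteq> x \<and> udeg E rt z \<ge> 3}"

definition dmin :: "'v set \<Rightarrow> ('v \<times> 'v) set \<Rightarrow> nat" where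
  "dmin V E = (LEAST k. \<exists>x\<in>V. card (children E x) = k)"

definition Fn :: "'v set \<Rightarrow> ('v \<times> 'v) set \<Rightarrow> 'v \<Rightarrow> nat \<Rightarrow> nat \<Rightarrow> int" where
  "Fn V E rt n m =
     (if dmin V E = 1 then int (Min (Fbr E rt ` Zgen E rt m)) - int n
      else int m - \<lceil>real n / real (dmin V E - 1)\<rceil>)"

text \<open>A configuration is a list s of positions: s!i is the position of the
 (i+1)-st particle to have entered the tree. A history is a list of
 configurations, the current one at the head.\<close>

definition moves :: "('v \<times> 'v) set \<Rightarrow> 'v list \<Rightarrow> (nat \<times> 'v) set" where
  "moves E s = {(i, y). i < length s \<and> (s ! i, y) \<in> E \<and> y \<notin> set s}"

definition move_pmf :: "('v \<times> 'v) set \<Rightarrow> ('v \<Rightarrow> 'v \<Rightarrow> real) \<Rightarrow> 'v list \<Rightarrow> 'v list pmf" where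
  "move_pmf E r s =
     map_pmf (\<lambda>(i, y). s[i := y])
       (embed_pmf (\<lambda>(i, y). if (i, y) \<in> moves E s
                           then r (s ! i) y / (\<Sum>(j, z)\<in>moves E s. r (s ! j) z) else 0))"

text \<open>The insertion rule ins gives, as a function of the whole
 history, the probability that the next event is the insertion of a new particle at the root
 (only possible when the root is empty and fewer than n particles have entered).\<close>
definition tasep_step :: "('v \<times> 'v) set \<Rightarrow> ('v \<Rightarrow> 'v \<Rightarrow> real) \<Rightarrow> 'v \<Rightarrow> nat \<Rightarrow>
    ('v list list \<Rightarrow> real) \<Rightarrow> 'v list list \<Rightarrow> 'v list list pmf" where
  "tasep_step E r rt n ins h =
     (let s = hd h in
      bind_pmf (bernoulli_pmf (if length s < n \<and> rt \<notin> set s then ins h else 0))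
        (\<lambda>b. if b then return_pmf ((s @ [rt]) # h)
             else if moves E s = {} then return_pmf (s # h)
             else map_pmf (\<lambda>s'. s' # h) (move_pmf E r s)))"

primrec tasep_run :: "('v \<times> 'v) set \<Rightarrow> ('v \<Rightarrow> 'v \<Rightarrow> real) \<Rightarrow> 'v \<Rightarrow> nat \<Rightarrow>
    ('v list list \<Rightarrow> real) \<Rightarrow> nat \<Rightarrow> 'v list list pmf" where
  "tasep_run E r rt n ins 0 = return_pmf [[]]"
| "tasep_run E r rt n ins (Suc N) = bind_pmf (tasep_run E r rt n ins N) (tasep_step E r rt n ins)"

definition visits :: "'v list list \<Rightarrow> nat \<Rightarrow> 'v \<Rightarrow> bool" where
  "visits h i x \<longleftrightarrow> (\<exists>s\<in>set h. i < length s \<and> s ! i = x)"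

definition distinct_gen :: "('v \<times> 'v) set \<Rightarrow> 'v \<Rightarrow> nat \<Rightarrow> nat \<Rightarrow> 'v list list \<Rightarrow> bool" where
  "distinct_gen E rt n m h \<longleftrightarrow>
     (\<forall>i<n. \<forall>j<n. i \<noteq> j \<longrightarrow> \<not> (\<exists>x\<in>Zgen E rt m. visits h i x \<and> visits h j x))"

end

theory Submission
  imports Defs
begin


locale tt =
  fixes V :: "'v set" and E :: "('v \<times> 'v) set" and rt :: 'v
  assumes tree: "rooted_tree V E rt"
    and no_leaves: "\<forall>x\<in>V. children E x \<noteq> {}"
begin

abbreviation desc where "desc x y \<equiv> (x, y) \<in> E\<^sup>*"

lemma rt_V: "rt \<in> V" using tree by (simp add: rooted_tree_def)
lemma E_V: "(x, y) \<in> E \<Longrightarrow> x \<in> V \<and> y \<in> V" using tree by (auto simp: rooted_tree_def)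
lemma no_in_rt: "(x, rt) \<notin> E" using tree by (simp add: rooted_tree_def)
lemma uniq_parent: "(x, y) \<in> E \<Longrightarrow> (x', y) \<in> E \<Longrightarrow> x = x'"
proof -
  assume a: "(x, y) \<in> E" "(x', y) \<in> E"
  have "y \<in> V - {rt}" using a E_V no_in_rt by blast
  then have "\<exists>!x. (x, y) \<in> E" using tree by (simp add: rooted_tree_def)
  then show ?thesis using a by blast
qed
lemma fin_children: "x \<in> V \<Longrightarrow> finite (children E x)" using tree by (simp add: rooted_tree_def)
lemma V_desc: "x \<in> V \<Longrightarrow> desc rt x" using tree by (simp add: rooted_tree_def)
lemma desc_V: "desc x y \<Longrightarrow> x \<in> V \<Longrightarrow> y \<in> V"
  by (induction rule: rtrancl_induct) (auto dest: E_V)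

lemma relpow_rt_unique: "(rt, y) \<in> E ^^ k \<Longrightarrow> (rt, y) \<in> E ^^ l \<Longrightarrow> k = l"
proof (induction k arbitrary: y l)
  case 0
  then have "y = rt" by simp
  show ?case
  proof (cases l)
    case (Suc l') with 0 \<open>y = rt\<close> show ?thesis using no_in_rt by (auto elim: relpow_Suc_E)
  qed simp
next
  case (Suc k)
  from Suc.prems(1) obtain z where z: "(rt, z) \<in> E ^^ k" "(z, y) \<in> E" by (auto elim: relpow_Suc_E)
  show ?case
  proof (cases l)
    case 0 with Suc.prems z show ?thesis using no_in_rt by auto
  next
    case (Suc l')
    with Suc.prems(2) obtain z' where z': "(rt, z') \<in> E ^^ l'" "(z', y) \<in> E" by (auto elim: relpow_Suc_E)
    have "z = z'" using uniq_parent z z' by blast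
    with Suc.IH z z' \<open>l = Suc l'\<close> show ?thesis by blast
  qed
qed

definition gen :: "'v \<Rightarrow> nat" where "gen x = (THE k. (rt, x) \<in> E ^^ k)"

lemma gen_eq: "(rt, x) \<in> E ^^ k \<Longrightarrow> gen x = k"
  unfolding gen_def using relpow_rt_unique by blast

lemma gen_rt[simp]: "gen rt = 0" by (rule gen_eq) simp

lemma gen_ex: "x \<in> V \<Longrightarrow> (rt, x) \<in> E ^^ gen x"
proof -
  assume "x \<in> V"
  then obtain k where "(rt, x) \<in> E ^^ k" using V_desc rtrancl_power by blast
  then show ?thesis using gen_eq by simp
qed

lemma gen_relpow: "x \<in> V \<Longrightarrow> (x, y) \<in> E ^^ a \<Longrightarrow> gen y = gen x + a"
  using gen_ex relpow_add gen_eq by (metis relcomp.relcompI)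

lemma gen_edge: "(x, y) \<in> E \<Longrightarrow> gen y = Suc (gen x)"
  using gen_relpow[of x y 1] E_V by auto

lemma gen_desc: "desc x y \<Longrightarrow> x \<in> V \<Longrightarrow> gen x \<le> gen y"
  using gen_relpow rtrancl_power by (metis le_add1)

lemma desc_gen_eq: "desc x y \<Longrightarrow> x \<in> V \<Longrightarrow> gen x = gen y \<Longrightarrow> x = y"
proof -
  assume a: "desc x y" "x \<in> V" "gen x = gen y"
  then obtain k where "(x, y) \<in> E ^^ k" using rtrancl_power by blast
  moreover then have "k = 0" using gen_relpow a by force
  ultimately show ?thesis by simp
qed

lemma desc_antisym: "desc x y \<Longrightarrow> desc y x \<Longrightarrow> x \<in> V \<Longrightarrow> x = y"
  using gen_desc desc_gen_eq desc_V by (meson le_antisym)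

lemma desc_edge_gen_less: "(x, y) \<in> E \<Longrightarrow> gen x < gen y" using gen_edge by simp

lemma anc_comparable: "desc x y \<Longrightarrow> desc z y \<Longrightarrow> desc x z \<or> desc z x"
proof (induction arbitrary: z rule: rtrancl_induct)
  case base then show ?case by simp
next
  case (step y' y)
  show ?case
  proof (cases "z = y")
    case True with step show ?thesis by (meson rtrancl.rtrancl_into_rtrancl)
  next
    case False
    with step.prems obtain w where w: "desc z w" "(w, y) \<in> E"
      by (metis rtranclE)
    then have "w = y'" using uniq_parent step.hyps by blast
    with w step.IH show ?thesis by blast
  qed
qed

lemma desc_step_first: "desc x y \<Longrightarrow> x \<noteq> y \<Longrightarrow> \<exists>c. (x, c) \<in> E \<and> desc c y"
  by (metis converse_rtranclE)

lemma desc_last: "desc x y \<Longrightarrow> x \<noteq> y \<Longrightarrow> \<exists>w. desc x w \<and> (w, y) \<in> E"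
  by (metis rtranclE)

lemma desc_child_cases: "(v, c) \<in> E \<Longrightarrow> desc z c \<Longrightarrow> z = c \<or> desc z v"
proof -
  assume a: "(v, c) \<in> E" "desc z c"
  show ?thesis
  proof (cases "z = c")
    case False
    then obtain w where "desc z w" "(w, c) \<in> E" using desc_last a by blast
    with a uniq_parent show ?thesis by blast
  qed simp
qed

definition Zg :: "nat \<Rightarrow> 'v set" where "Zg m = {x \<in> V. gen x = m}"

lemma Zgen_eq: "Zgen E rt m = Zg m"
  unfolding Zgen_def Zg_def
  using gen_eq gen_ex desc_V rtrancl_power rt_V by blast

lemma Zg_finite: "finite (Zg m)"
proof (induction m)
  case 0
  have "Zg 0 = {rt}" unfolding Zg_def using gen_ex rt_V by fastforce
  then show ?case by simp
next
  case (Suc m)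
  have "Zg (Suc m) \<subseteq> (\<Union>x\<in>Zg m. children E x)"
  proof
    fix y assume "y \<in> Zg (Suc m)"
    then have y: "y \<in> V" "gen y = Suc m" by (auto simp: Zg_def)
    then have "(rt, y) \<in> E ^^ Suc m" using gen_ex by metis
    then obtain x where "(rt, x) \<in> E ^^ m" "(x, y) \<in> E" by (auto elim: relpow_Suc_E)
    moreover have "x \<in> Zg m" using \<open>(rt, x) \<in> E ^^ m\<close> \<open>(x, y) \<in> E\<close> E_V gen_eq by (auto simp: Zg_def)
    ultimately show "y \<in> (\<Union>x\<in>Zg m. children E x)"
      by (auto simp: children_def)
  qed
  moreover have "finite (\<Union>x\<in>Zg m. children E x)"
    using Suc fin_children by (auto simp: Zg_def)
  ultimately show ?case by (rule finite_subset)
qed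

lemma desc_exists_gen: "x \<in> V \<Longrightarrow> \<exists>y. (x, y) \<in> E ^^ k"
proof (induction k)
  case (Suc k)
  then obtain y where y: "(x, y) \<in> E ^^ k" by blast
  have "y \<in> V" using desc_V[OF relpow_imp_rtrancl[OF y] Suc.prems] .
  then obtain z where "(y, z) \<in> E" using no_leaves by (auto simp: children_def)
  with y show ?case by auto
qed simp

lemma desc_in_Zg: "x \<in> V \<Longrightarrow> gen x \<le> m \<Longrightarrow> \<exists>y\<in>Zg m. desc x y"
proof -
  assume a: "x \<in> V" "gen x \<le> m"
  then obtain y where y: "(x, y) \<in> E ^^ (m - gen x)" using desc_exists_gen by blast
  then have "gen y = m" using gen_relpow a by simp
  moreover have "y \<in> V" using desc_V relpow_imp_rtrancl y a by blast
  ultimately show ?thesis using y relpow_imp_rtrancl unfolding Zg_def by blast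
qed

lemma anc_V: "desc a x \<Longrightarrow> x \<in> V \<Longrightarrow> a \<in> V"
  using desc_step_first E_V by blast

lemma anc_finite: "finite {z. desc z x}"
proof (cases "x \<in> V")
  case True
  have "inj_on gen {z. desc z x}"
  proof (rule inj_onI)
    fix a b assume ab: "a \<in> {z. desc z x}" "b \<in> {z. desc z x}" "gen a = gen b"
    then have "desc a b \<or> desc b a" using anc_comparable by blast
    moreover have "a \<in> V" "b \<in> V" using ab True anc_V by auto
    ultimately show "a = b" using desc_gen_eq ab by metis
  qed
  moreover have "gen ` {z. desc z x} \<subseteq> {..gen x}"
    using True anc_V gen_desc by auto
  ultimately show ?thesis using finite_imageD finite_subset by blast
next
  case False
  then have "{z. desc z x} = {x}" using E_V by (auto elim: rtranclE)
  then show ?thesis by simp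
qed

end


locale tm = tt V E rt for V :: "'v set" and E rt +
  fixes r :: "'v \<Rightarrow> 'v \<Rightarrow> real" and n :: nat and \<epsilon> :: real
  assumes rates_pos: "\<forall>(x, y)\<in>E. r x y > 0"
    and eps: "0 < \<epsilon>"
    and UE: "\<forall>x y z. (x, y) \<in> E \<longrightarrow> (x, z) \<in> E \<longrightarrow> r x y / r x z \<ge> \<epsilon>"
begin

definition cinv :: "'v list \<Rightarrow> bool" where
  "cinv s \<longleftrightarrow> distinct s \<and> set s \<subseteq> V \<and> length s \<le> n \<and>
     (\<forall>a b. a < b \<longrightarrow> b < length s \<longrightarrow> \<not> desc (s ! a) (s ! b))"

definition hinv :: "'v list list \<Rightarrow> bool" where
  "hinv h \<longleftrightarrow> h \<noteq> [] \<and> cinv (hd h) \<and>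
     (\<forall>p x. visits h p x \<longrightarrow> p < length (hd h) \<and> desc x (hd h ! p))"

definition wt :: "'v list \<Rightarrow> nat \<times> 'v \<Rightarrow> real" where
  "wt s = (\<lambda>(i, y). if (i, y) \<in> moves E s
                           then r (s ! i) y / (\<Sum>(j, z)\<in>moves E s. r (s ! j) z) else 0)"

lemma move_pmf_wt: "move_pmf E r s = map_pmf (\<lambda>(i, y). s[i := y]) (embed_pmf (wt s))"
  unfolding move_pmf_def wt_def by simp

lemma movesD: "(i, y) \<in> moves E s \<Longrightarrow> i < length s \<and> (s ! i, y) \<in> E \<and> y \<notin> set s"
  by (simp add: moves_def)

lemma moves_finite: "cinv s \<Longrightarrow> finite (moves E s)"
proof -
  assume c: "cinv s"
  have "moves E s \<subseteq> Sigma {..<length s} (\<lambda>i. children E (s ! i))"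
    by (auto simp: moves_def children_def)
  moreover have "finite (Sigma {..<length s} (\<lambda>i. children E (s ! i)))"
  proof (intro finite_SigmaI)
    fix i assume "i \<in> {..<length s}"
    then have "s ! i \<in> V" using c nth_mem by (auto simp: cinv_def)
    then show "finite (children E (s ! i))" using fin_children by blast
  qed simp
  ultimately show ?thesis by (rule finite_subset)
qed

lemma r_pos: "(x, y) \<in> E \<Longrightarrow> r x y > 0" using rates_pos by auto

lemma S_pos: "cinv s \<Longrightarrow> moves E s \<noteq> {} \<Longrightarrow> 0 < (\<Sum>(j, z)\<in>moves E s. r (s ! j) z)"
  using moves_finite by (intro sum_pos) (auto simp: moves_def intro: r_pos)

lemma wt_nonneg: "cinv s \<Longrightarrow> 0 \<le> wt s x"
proof (cases "x \<in> moves E s")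
  case True
  assume c: "cinv s"
  obtain i y where x: "x = (i, y)" by (cases x)
  have "0 < (\<Sum>(j, z)\<in>moves E s. r (s ! j) z)" using S_pos[OF c] True by blast
  moreover have "0 < r (s ! i) y" using True x movesD r_pos by blast
  ultimately show ?thesis using True x by (simp add: wt_def)
next
  case False then show ?thesis by (cases x) (simp add: wt_def)
qed

lemma wt_sum: "cinv s \<Longrightarrow> moves E s \<noteq> {} \<Longrightarrow> (\<Sum>x\<in>moves E s. wt s x) = 1"
proof -
  assume c: "cinv s" "moves E s \<noteq> {}"
  let ?S = "\<Sum>(j, z)\<in>moves E s. r (s ! j) z"
  have "(\<Sum>x\<in>moves E s. wt s x) = (\<Sum>x\<in>moves E s. (case x of (j, z) \<Rightarrow> r (s ! j) z) / ?S)"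
    by (intro sum.cong) (auto simp: wt_def)
  also have "\<dots> = ?S / ?S" by (rule sum_divide_distrib[symmetric])
  also have "\<dots> = 1" using S_pos[OF c] by simp
  finally show ?thesis .
qed

lemma wt_zero: "x \<notin> moves E s \<Longrightarrow> wt s x = 0"
  by (cases x) (auto simp: wt_def)

lemma wt_prob: "cinv s \<Longrightarrow> moves E s \<noteq> {} \<Longrightarrow> (\<integral>\<^sup>+x. ennreal (wt s x) \<partial>count_space UNIV) = 1"
proof -
  assume c: "cinv s" "moves E s \<noteq> {}"
  have "(\<integral>\<^sup>+x. ennreal (wt s x) \<partial>count_space UNIV) = (\<Sum>x\<in>moves E s. ennreal (wt s x))"
    using moves_finite[OF c(1)] wt_zero by (intro nn_integral_count_space') auto
  also have "\<dots> = ennreal (\<Sum>x\<in>moves E s. wt s x)"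
    using wt_nonneg[OF c(1)] by (simp add: sum_ennreal)
  finally show ?thesis using wt_sum[OF c] by simp
qed

lemma pmf_wt: "cinv s \<Longrightarrow> moves E s \<noteq> {} \<Longrightarrow> pmf (embed_pmf (wt s)) x = wt s x"
  using pmf_embed_pmf[of "wt s"] wt_nonneg wt_prob by blast

lemma set_wt: "cinv s \<Longrightarrow> moves E s \<noteq> {} \<Longrightarrow> set_pmf (embed_pmf (wt s)) \<subseteq> moves E s"
  using set_embed_pmf[of "wt s"] wt_nonneg wt_prob wt_zero by blast

definition trans :: "'v list \<Rightarrow> 'v list \<Rightarrow> bool" where
  "trans s s' \<longleftrightarrow> s' = s \<or> (length s < n \<and> rt \<notin> set s \<and> s' = s @ [rt]) \<or>
     (\<exists>x\<in>moves E s. s' = s[fst x := snd x])"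

lemma set_step: "hinv h \<Longrightarrow> h' \<in> set_pmf (tasep_step E r rt n ins h) \<Longrightarrow>
   \<exists>s'. h' = s' # h \<and> trans (hd h) s'"
proof -
  assume hi: "hinv h" and h': "h' \<in> set_pmf (tasep_step E r rt n ins h)"
  define s where "s = hd h"
  have c: "cinv s" using hi by (simp add: hinv_def s_def)
  let ?p = "if length s < n \<and> rt \<notin> set s then ins h else 0"
  from h' obtain b where b: "b \<in> set_pmf (bernoulli_pmf ?p)"
    and h'b: "h' \<in> set_pmf (if b then return_pmf ((s @ [rt]) # h)
             else if moves E s = {} then return_pmf (s # h)
             else map_pmf (\<lambda>s'. s' # h) (move_pmf E r s))"
    unfolding tasep_step_def s_def Let_def by auto
  show ?thesis
  proof (cases b)
    case True
    have "length s < n \<and> rt \<notin> set s"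
    proof (rule ccontr)
      assume "\<not> (length s < n \<and> rt \<notin> set s)"
      then have "?p = 0" by (rule if_not_P)
      have "True \<in> set_pmf (bernoulli_pmf 0)" using b True \<open>?p = 0\<close> by metis
      moreover have "pmf (bernoulli_pmf 0) True = 0" by simp
      ultimately show False by (simp add: set_pmf_iff)
    qed
    with True h'b show ?thesis by (auto simp: trans_def s_def)
  next
    case False
    show ?thesis
    proof (cases "moves E s = {}")
      case True with False h'b show ?thesis by (auto simp: trans_def s_def)
    next
      case ne: False
      from False h'b ne have "h' \<in> (\<lambda>s'. s' # h) ` (\<lambda>(i, y). s[i := y]) ` set_pmf (embed_pmf (wt s))"
        by (simp add: move_pmf_wt)
      then obtain i y where iy: "(i, y) \<in> set_pmf (embed_pmf (wt s))" "h' = s[i := y] # h" by auto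
      then have "(i, y) \<in> moves E s" using set_wt[OF c ne] by blast
      with iy show ?thesis unfolding trans_def s_def by force
    qed
  qed
qed

lemma desc_into_rt: "desc x rt \<Longrightarrow> x = rt"
  using desc_last no_in_rt by blast

lemma cinv_trans: "cinv s \<Longrightarrow> trans s s' \<Longrightarrow> cinv s'"
proof -
  assume c: "cinv s" and t: "trans s s'"
  from t consider "s' = s" | "length s < n" "rt \<notin> set s" "s' = s @ [rt]"
    | i y where "(i, y) \<in> moves E s" "s' = s[i := y]" unfolding trans_def by auto
  then show ?thesis
  proof cases
    case 1 with c show ?thesis by simp
  next
    case 2
    have "\<not> desc (s' ! a) (s' ! b)" if "a < b" "b < length s'" for a b
    proof (cases "b < length s")
      case True with that 2 c show ?thesis by (simp add: cinv_def nth_append)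
    next
      case False
      then have "b = length s" "s' ! b = rt" "s' ! a = s ! a" "a < length s" using that 2 by (auto simp: nth_append)
      then show ?thesis using 2 desc_into_rt nth_mem by metis
    qed
    with 2 c rt_V show ?thesis by (auto simp: cinv_def)
  next
    case 3
    note mv = movesD[OF 3(1)]
    have yV: "y \<in> V" using mv E_V by blast
    have "distinct s'" using c 3 mv by (auto simp: cinv_def intro!: distinct_list_update)
    moreover have "set s' \<subseteq> V" using c 3 yV set_update_subset_insert[of s i y] by (auto simp: cinv_def)
    moreover have "\<not> desc (s' ! a) (s' ! b)" if "a < b" "b < length s'" for a b
    proof -
      have bl: "b < length s" using that 3 by simp
      have nd: "\<not> desc (s ! a) (s ! b)" using c that bl by (simp add: cinv_def)
      show ?thesis
      proof (cases "a = i")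
        case True
        then have "s' ! a = y" "s' ! b = s ! b" using that 3 mv by auto
        moreover have "\<not> desc y (s ! b)"
          using nd True mv by (meson converse_rtrancl_into_rtrancl)
        ultimately show ?thesis by simp
      next
        case False
        show ?thesis
        proof (cases "b = i")
          case True
          then have "s' ! b = y" "s' ! a = s ! a" using that 3 mv False by auto
          moreover have "\<not> desc (s ! a) y"
          proof
            assume "desc (s ! a) y"
            then have "s ! a = y \<or> desc (s ! a) (s ! i)" using desc_child_cases mv by blast
            then show False using nd True mv that bl by auto
          qed
          ultimately show ?thesis by simp
        next
          case False
          with \<open>a \<noteq> i\<close> 3 nd show ?thesis by simp
        qed
      qed
    qed
    ultimately show ?thesis using c 3 by (auto simp: cinv_def)
  qed
qed

lemma trans_desc: "trans s s' \<Longrightarrow> p < length s \<Longrightarrow> length s \<le> length s' \<and> desc (s ! p) (s' ! p)"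
  unfolding trans_def
  by (auto simp: nth_append nth_list_update moves_def)

lemma hinv_step: "hinv h \<Longrightarrow> trans (hd h) s' \<Longrightarrow> hinv (s' # h)"
proof -
  assume hi: "hinv h" and t: "trans (hd h) s'"
  have c': "cinv s'" using cinv_trans t hi by (auto simp: hinv_def)
  have "p < length s' \<and> desc x (s' ! p)" if v: "visits (s' # h) p x" for p x
  proof -
    from v have "(p < length s' \<and> s' ! p = x) \<or> visits h p x" by (auto simp: visits_def)
    then show ?thesis
    proof
      assume "visits h p x"
      then have "p < length (hd h)" "desc x (hd h ! p)" using hi by (auto simp: hinv_def)
      then show ?thesis using trans_desc[OF t] by (meson order_less_le_trans rtrancl_trans)
    qed auto
  qed
  with c' show ?thesis by (auto simp: hinv_def)
qed

lemma hinv_init: "hinv [[]]"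
  by (auto simp: hinv_def cinv_def visits_def)

lemma run_hinv: "h \<in> set_pmf (tasep_run E r rt n ins N) \<Longrightarrow> hinv h"
proof (induction N arbitrary: h)
  case 0 then show ?case using hinv_init by simp
next
  case (Suc N)
  then obtain h0 where h0: "h0 \<in> set_pmf (tasep_run E r rt n ins N)" "h \<in> set_pmf (tasep_step E r rt n ins h0)"
    by auto
  then have "hinv h0" using Suc.IH by blast
  with h0 set_step obtain s' where "h = s' # h0" "trans (hd h0) s'" by blast
  with hinv_step \<open>hinv h0\<close> show ?case by blast
qed

end


lemma avg_le:
  fixes w G :: "'a \<Rightarrow> real"
  assumes fin: "finite M" and wn: "\<forall>x\<in>M. 0 \<le> w x" and ws: "sum w M = 1" and G0: "0 \<le> G0"
    and H: "(\<forall>x\<in>M. G x \<le> G0) \<or> (\<exists>a\<in>M. \<exists>b\<in>M. a \<noteq> b \<and> w a * G a + w b * G b \<le> (w a + w b) * G0 \<and> (\<forall>x\<in>M - {a, b}. G x \<le> G0))"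
  shows "(\<Sum>x\<in>M. w x * G x) \<le> G0"
  using H
proof
  assume A: "\<forall>x\<in>M. G x \<le> G0"
  have "(\<Sum>x\<in>M. w x * G x) \<le> (\<Sum>x\<in>M. w x * G0)"
    using A wn by (intro sum_mono mult_left_mono) auto
  also have "\<dots> = G0" using ws by (simp add: sum_distrib_right[symmetric])
  finally show ?thesis .
next
  assume "\<exists>a\<in>M. \<exists>b\<in>M. a \<noteq> b \<and> w a * G a + w b * G b \<le> (w a + w b) * G0 \<and> (\<forall>x\<in>M - {a, b}. G x \<le> G0)"
  then obtain a b where ab: "a \<in> M" "b \<in> M" "a \<noteq> b" "w a * G a + w b * G b \<le> (w a + w b) * G0"
    and rest: "\<forall>x\<in>M - {a, b}. G x \<le> G0" by blast
  have split: "(\<Sum>x\<in>M. f x) = f a + f b + (\<Sum>x\<in>M - {a, b}. f x)" for f :: "'a \<Rightarrow> real"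
  proof -
    have "(\<Sum>x\<in>M. f x) = f a + (\<Sum>x\<in>M - {a}. f x)" using fin ab by (simp add: sum.remove)
    also have "(\<Sum>x\<in>M - {a}. f x) = f b + (\<Sum>x\<in>M - {a} - {b}. f x)" using fin ab by (simp add: sum.remove)
    also have "M - {a} - {b} = M - {a, b}" by auto
    finally show ?thesis by simp
  qed
  have "(\<Sum>x\<in>M - {a, b}. w x * G x) \<le> (\<Sum>x\<in>M - {a, b}. w x * G0)"
    using rest wn by (intro sum_mono mult_left_mono) auto
  then have "(\<Sum>x\<in>M. w x * G x) \<le> (w a + w b) * G0 + (\<Sum>x\<in>M - {a, b}. w x * G0)"
    using split[of "\<lambda>x. w x * G x"] ab by linarith
  also have "\<dots> = (\<Sum>x\<in>M. w x * G0)" using split[of "\<lambda>x. w x * G0"] by (simp add: algebra_simps)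
  also have "\<dots> = G0" using ws by (simp add: sum_distrib_right[symmetric])
  finally show ?thesis .
qed

locale tp = tm V E rt r n \<epsilon> for V :: "'v set" and E rt r n \<epsilon> +
  fixes m :: nat and Pf :: "'v \<Rightarrow> int" and blk :: "nat \<Rightarrow> int" and pen :: "'v \<Rightarrow> bool" and D :: nat
  assumes D_pos: "1 \<le> D"
    and P_child: "x \<in> V \<Longrightarrow> gen x < m \<Longrightarrow> (x, c) \<in> E \<Longrightarrow> Pf x - (if pen x then 1 else 0) \<le> Pf c"
    and P_end: "x \<in> V \<Longrightarrow> gen x = m \<Longrightarrow> Pf x \<le> 0"
    and pen_children: "x \<in> V \<Longrightarrow> gen x < m \<Longrightarrow> pen x \<Longrightarrow> D + 1 \<le> card (children E x)"
    and blk_mono: "a \<le> b \<Longrightarrow> blk a \<le> blk b"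
    and blk_nonneg: "0 \<le> blk a"
    and blk_drop: "D \<le> t \<Longrightarrow> t \<le> a \<Longrightarrow> blk (a - t) \<le> blk a - 1"
begin

definition Q :: real where "Q = 1 / (1 + \<epsilon>)"
lemma Q_pos: "0 < Q" using eps by (simp add: Q_def)
lemma Q_less: "Q < 1" using eps by (simp add: Q_def)
lemma Q_anti: "a \<le> b \<Longrightarrow> Q powr b \<le> Q powr a" using Q_pos Q_less by (intro powr_mono') auto
lemma Q_ge1: "a \<le> 0 \<Longrightarrow> 1 \<le> Q powr a" using Q_anti[of a 0] Q_pos by simp
lemma Q_minus1: "Q powr (a - 1) = (1 + \<epsilon>) * Q powr a"
proof -
  have "Q powr (a - 1) = Q powr a / Q powr 1" by (rule powr_diff)
  also have "\<dots> = Q powr a / Q" using Q_pos by simp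
  finally show ?thesis using eps by (simp add: Q_def)
qed

definition vp :: "nat \<Rightarrow> 'v list \<Rightarrow> 'v" where "vp j s = (if j < length s then s ! j else rt)"
definition Rset :: "nat \<Rightarrow> nat \<Rightarrow> 'v list \<Rightarrow> nat set" where
  "Rset i j s = {p. p < n \<and> p \<noteq> i \<and> p \<noteq> j \<and> (length s \<le> p \<or> desc (s ! p) (vp j s) \<or> desc (vp j s) (s ! p))}"
definition expo :: "nat \<Rightarrow> nat \<Rightarrow> 'v list \<Rightarrow> int" where
  "expo i j s = Pf (vp j s) - blk (card (Rset i j s))"
definition bad :: "nat \<Rightarrow> nat \<Rightarrow> 'v list \<Rightarrow> bool" where
  "bad i j s \<longleftrightarrow> j < length s \<and> (\<exists>x\<in>V. gen x = m \<and> desc x (s ! i) \<and> desc x (s ! j))"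
definition follow :: "nat \<Rightarrow> nat \<Rightarrow> 'v list \<Rightarrow> bool" where
  "follow i j s \<longleftrightarrow> length s \<le> j \<or> (gen (s ! j) < m \<and> desc (s ! j) (s ! i) \<and> s ! j \<noteq> s ! i)"
definition gp :: "nat \<Rightarrow> nat \<Rightarrow> 'v list \<Rightarrow> real" where
  "gp i j s = (if bad i j s then 1 else if follow i j s then Q powr expo i j s else 0)"

lemma gp_nonneg: "0 \<le> gp i j s" using Q_pos by (simp add: gp_def)
lemma gp_bad: "bad i j s \<Longrightarrow> 1 \<le> gp i j s" by (simp add: gp_def)
lemma gp_le_Q: "(bad i j s \<Longrightarrow> expo i j s \<le> 0) \<Longrightarrow> gp i j s \<le> Q powr expo i j s"
  using Q_ge1 Q_pos by (auto simp: gp_def)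

lemma cinv_nth_V: "cinv s \<Longrightarrow> p < length s \<Longrightarrow> s ! p \<in> V" using nth_mem by (auto simp: cinv_def)

lemma gen_lt_not_bad: "cinv s \<Longrightarrow> j < length s \<Longrightarrow> gen (s ! j) < m \<Longrightarrow> \<not> bad i j s"
  unfolding bad_def using gen_desc by fastforce

context fixes i j assumes ij: "i < j" "j < n"
begin

lemma Rset_fin: "finite (Rset i j s)" by (rule finite_subset[of _ "{..<n}"]) (auto simp: Rset_def)

lemma Rset_root: "cinv s \<Longrightarrow> vp j s = rt \<Longrightarrow> Rset i j s = {p. p < n \<and> p \<noteq> i \<and> p \<noteq> j}"
  unfolding Rset_def using cinv_nth_V V_desc by auto

lemma card_all: "card {p. p < n \<and> p \<noteq> i \<and> p \<noteq> j} = n - 2"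
proof -
  have "{p. p < n \<and> p \<noteq> i \<and> p \<noteq> j} = {..<n} - {i, j}" by auto
  moreover have "card ({..<n} - {i, j}) = n - 2" using ij by (subst card_Diff_subset) auto
  ultimately show ?thesis by simp
qed

lemma gp_init: "gp i j [] = Q powr (Pf rt - blk (n - 2))"
proof -
  have "Rset i j [] = {p. p < n \<and> p \<noteq> i \<and> p \<noteq> j}" by (auto simp: Rset_def)
  then show ?thesis using card_all by (simp add: gp_def bad_def follow_def expo_def vp_def)
qed

lemma bad_trans: "cinv s \<Longrightarrow> trans s s' \<Longrightarrow> bad i j s \<Longrightarrow> bad i j s'"
proof -
  assume t: "trans s s'" and b: "bad i j s"
  then have jl: "j < length s" by (simp add: bad_def)
  have "length s \<le> length s'" "desc (s ! i) (s' ! i)" "desc (s ! j) (s' ! j)"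
    using trans_desc[OF t] jl ij by auto
  with b show ?thesis unfolding bad_def by (meson order_less_le_trans rtrancl_trans)
qed

lemma vp_other: "(p, y) \<in> moves E s \<Longrightarrow> p \<noteq> j \<Longrightarrow> vp j (s[p := y]) = vp j s"
  by (simp add: vp_def)

lemma vp_in: "cinv s \<Longrightarrow> vp j s \<in> set s \<or> vp j s = rt"
  by (auto simp: vp_def)

lemma Rset_sub_other: "cinv s \<Longrightarrow> (p, y) \<in> moves E s \<Longrightarrow> p \<noteq> j \<Longrightarrow> Rset i j (s[p := y]) \<subseteq> Rset i j s"
proof
  fix q assume c: "cinv s" and mv: "(p, y) \<in> moves E s" and pj: "p \<noteq> j" and q: "q \<in> Rset i j (s[p := y])"
  note M = movesD[OF mv]
  define v where "v = vp j s"
  have vv: "vp j (s[p := y]) = v" using vp_other[OF mv pj] by (simp add: v_def)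
  have q1: "q < n" "q \<noteq> i" "q \<noteq> j" using q by (auto simp: Rset_def)
  have q2: "length s \<le> q \<or> desc (s[p := y] ! q) v \<or> desc v (s[p := y] ! q)" using q vv by (simp add: Rset_def)
  have "length s \<le> q \<or> desc (s ! q) v \<or> desc v (s ! q)"
  proof (cases "q = p")
    case False then show ?thesis using q2 by simp
  next
    case True
    then have yq: "s[p := y] ! q = y" using M by simp
    have vy: "v \<noteq> y" using vp_in[OF c] M no_in_rt unfolding v_def by metis
    from q2 yq have "length s \<le> q \<or> desc y v \<or> desc v y" by simp
    then show ?thesis
    proof (elim disjE)
      assume "desc y v" then show ?thesis using M True by (meson converse_rtrancl_into_rtrancl)
    next
      assume "desc v y" then show ?thesis using desc_child_cases M True vy by blast
    qed simp
  qed
  with q1 show "q \<in> Rset i j s" by (simp add: Rset_def v_def)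
qed

lemma expo_other: "cinv s \<Longrightarrow> (p, y) \<in> moves E s \<Longrightarrow> p \<noteq> j \<Longrightarrow> expo i j s \<le> expo i j (s[p := y])"
proof -
  assume a: "cinv s" "(p, y) \<in> moves E s" "p \<noteq> j"
  have "card (Rset i j (s[p := y])) \<le> card (Rset i j s)"
    using Rset_sub_other[OF a] Rset_fin by (intro card_mono)
  then show ?thesis using blk_mono vp_other[OF a(2,3)] by (simp add: expo_def)
qed

lemma gp_other: "cinv s \<Longrightarrow> (p, y) \<in> moves E s \<Longrightarrow> p \<noteq> j \<Longrightarrow> gp i j (s[p := y]) \<le> gp i j s"
proof -
  assume c: "cinv s" and mv: "(p, y) \<in> moves E s" and pj: "p \<noteq> j"
  note M = movesD[OF mv]
  define s' where "s' = s[p := y]"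
  have t: "trans s s'" using mv unfolding trans_def s'_def by force
  have c': "cinv s'" using cinv_trans[OF c t] .
  have len: "length s' = length s" by (simp add: s'_def)
  have ex: "expo i j s \<le> expo i j s'" using expo_other[OF c mv pj] by (simp add: s'_def)
  have sj: "j < length s \<Longrightarrow> s' ! j = s ! j" using pj by (simp add: s'_def)
  have "gp i j s' \<le> gp i j s"
  proof (cases "bad i j s")
    case True then show ?thesis using bad_trans[OF c t] unfolding s'_def by (simp add: gp_def)
  next
    case nb: False
    show ?thesis
    proof (cases "j < length s")
      case False
      then have "\<not> bad i j s'" "follow i j s'" "\<not> bad i j s" "follow i j s"
        using len by (auto simp: bad_def follow_def)
      then show ?thesis using ex Q_anti by (simp add: gp_def)
    next
      case jl: True
      define u where "u = s ! i"
      define v where "v = s ! j"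
      have il: "i < length s" using jl ij by simp
      have vV: "v \<in> V" using cinv_nth_V[OF c jl] v_def by simp
      have sj': "s' ! j = v" using sj jl v_def by simp
      show ?thesis
      proof (cases "p = i")
        case False
        then have "s' ! i = u" by (simp add: s'_def u_def)
        then have "bad i j s' = bad i j s" "follow i j s' = follow i j s"
          using sj' len u_def v_def by (simp_all add: bad_def follow_def)
        then show ?thesis using ex Q_anti by (simp add: gp_def)
      next
        case True
        then have si': "s' ! i = y" using M by (simp add: s'_def)
        have uy: "(u, y) \<in> E" using M True u_def by simp
        show ?thesis
        proof (cases "follow i j s")
          case True
          then have f: "gen v < m" "desc v u" "v \<noteq> u" using jl by (auto simp: follow_def u_def v_def)
          have nb': "\<not> bad i j s'" using gen_lt_not_bad[OF c'] f sj' len jl by simp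
          have "v \<noteq> y" using M jl v_def nth_mem by metis
          moreover have "desc v y" using f uy by (meson rtrancl.rtrancl_into_rtrancl)
          ultimately have "follow i j s'" using f sj' si' by (auto simp: follow_def)
          with nb' show ?thesis using ex Q_anti nb True by (simp add: gp_def)
        next
          case False
          then have nf: "\<not> (gen v < m \<and> desc v u \<and> v \<noteq> u)" using jl by (auto simp: follow_def u_def v_def)
          have nd: "\<not> desc u v" using c ij jl by (auto simp: cinv_def u_def v_def)
          have "\<not> bad i j s'"
          proof
            assume "bad i j s'"
            then obtain x where x: "x \<in> V" "gen x = m" "desc x y" "desc x v" using si' sj' by (auto simp: bad_def)
            then have "x = y \<or> desc x u" using desc_child_cases uy by blast
            then show False
            proof
              assume "x = y" then show False using x nd uy by (meson converse_rtrancl_into_rtrancl)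
            next
              assume "desc x u" then show False using nb x jl by (auto simp: bad_def u_def v_def)
            qed
          qed
          moreover have "\<not> follow i j s'"
          proof
            assume "follow i j s'"
            then have "gen v < m" "desc v y" "v \<noteq> y" using si' sj' len jl by (auto simp: follow_def)
            then have "desc v u" using desc_child_cases uy by blast
            moreover have "v \<noteq> u" using c ij jl by (auto simp: cinv_def u_def v_def nth_eq_iff_index_eq)
            ultimately show False using nf \<open>gen v < m\<close> by blast
          qed
          ultimately show ?thesis using gp_nonneg by (simp add: gp_def)
        qed
      qed
    qed
  qed
  then show ?thesis by (simp add: s'_def)
qed


lemma gp_ins: "cinv s \<Longrightarrow> length s < n \<Longrightarrow> rt \<notin> set s \<Longrightarrow> gp i j (s @ [rt]) \<le> gp i j s"
proof -
  assume cs: "cinv s" and l: "length s < n" and rs: "rt \<notin> set s"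
  define s' where "s' = s @ [rt]"
  have t: "trans s s'" using l rs by (simp add: trans_def s'_def)
  have c': "cinv s'" using cinv_trans[OF cs t] .
  have nth': "q < length s \<Longrightarrow> s' ! q = s ! q" for q by (simp add: s'_def nth_append)
  have "gp i j s' \<le> gp i j s"
  proof (cases "bad i j s")
    case True then show ?thesis using bad_trans[OF cs t] by (simp add: gp_def)
  next
    case nb: False
    consider (a) "j < length s" | (b) "j = length s" | (c) "length s < j" by linarith
    then show ?thesis
    proof cases
      case a
      have vv: "vp j s' = vp j s" using a nth' by (simp add: vp_def s'_def)
      have "Rset i j s' \<subseteq> Rset i j s"
      proof
        fix q assume "q \<in> Rset i j s'"
        then show "q \<in> Rset i j s" using vv nth' by (cases "q < length s") (auto simp: Rset_def s'_def)
      qed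
      then have "card (Rset i j s') \<le> card (Rset i j s)" using Rset_fin by (intro card_mono)
      then have "expo i j s \<le> expo i j s'" using blk_mono vv by (simp add: expo_def)
      moreover have "bad i j s' = bad i j s" "follow i j s' = follow i j s"
        using a ij nth' by (auto simp: bad_def follow_def s'_def)
      ultimately show ?thesis using Q_anti by (simp add: gp_def)
    next
      case b
      have vs: "vp j s = rt" "vp j s' = rt" using b by (auto simp: vp_def s'_def)
      have R: "Rset i j s' = Rset i j s" using Rset_root[OF cs vs(1)] Rset_root[OF c' vs(2)] by simp
      have e: "expo i j s' = expo i j s" using R vs by (simp add: expo_def)
      have gs: "gp i j s = Q powr expo i j s" using nb b by (simp add: gp_def follow_def)
      have "bad i j s' \<Longrightarrow> expo i j s' \<le> 0"
      proof -
        assume "bad i j s'"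
        then obtain x where x: "x \<in> V" "gen x = m" "desc x (s' ! j)" by (auto simp: bad_def)
        have "s' ! j = rt" using b by (simp add: s'_def)
        then have "desc x rt" using x(3) by simp
        then have "x = rt" by (rule desc_into_rt)
        then have "m = 0" using x(2) by simp
        then have "Pf rt \<le> 0" using P_end rt_V by simp
        then show ?thesis using vs blk_nonneg[of "card (Rset i j s')"] by (simp add: expo_def)
      qed
      then have "gp i j s' \<le> Q powr expo i j s'" by (rule gp_le_Q)
      then show ?thesis using e gs by simp
    next
      case c
      have vs: "vp j s = rt" "vp j s' = rt" using c by (auto simp: vp_def s'_def)
      have R: "Rset i j s' = Rset i j s" using Rset_root[OF cs vs(1)] Rset_root[OF c' vs(2)] by simp
      have e: "expo i j s' = expo i j s" using R vs by (simp add: expo_def)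
      have "\<not> bad i j s'" "follow i j s'" "follow i j s" using c by (auto simp: bad_def follow_def s'_def)
      then show ?thesis using e nb by (simp add: gp_def)
    qed
  qed
  then show ?thesis by (simp add: s'_def)
qed

lemma child_uniq: "(v, a) \<in> E \<Longrightarrow> (v, b) \<in> E \<Longrightarrow> desc a u \<Longrightarrow> desc b u \<Longrightarrow> a = b"
proof -
  assume a: "(v, a) \<in> E" "(v, b) \<in> E" "desc a u" "desc b u"
  then have "desc a b \<or> desc b a" using anc_comparable by blast
  moreover have "gen a = gen b" using gen_edge a by simp
  moreover have "a \<in> V" "b \<in> V" using E_V a by auto
  ultimately show ?thesis using desc_gen_eq by metis
qed

lemma expo_jmove:
  assumes cs: "cinv s" and jl: "j < length s" and mv: "(j, y) \<in> moves E s"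
    and f: "gen (s ! j) < m" and dy: "desc y (s ! i)"
  shows "expo i j s - (if pen (s ! j) \<and> \<not> (children E (s ! j) - {y} \<subseteq> set s) then 1 else 0) \<le> expo i j (s[j := y])"
proof -
  define v where "v = s ! j"
  define s' where "s' = s[j := y]"
  note M = movesD[OF mv]
  have vy: "(v, y) \<in> E" "y \<notin> set s" using M v_def by auto
  have vV: "v \<in> V" using cinv_nth_V[OF cs jl] v_def by simp
  have vps: "vp j s = v" "vp j s' = y" using jl by (auto simp: vp_def v_def s'_def)
  have len: "length s' = length s" by (simp add: s'_def)
  have nq: "q \<noteq> j \<Longrightarrow> s' ! q = s ! q" for q by (simp add: s'_def)
  have sub: "Rset i j s' \<subseteq> Rset i j s"
  proof
    fix q assume q: "q \<in> Rset i j s'"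
    then have q1: "q < n" "q \<noteq> i" "q \<noteq> j" by (auto simp: Rset_def)
    then have q2: "length s \<le> q \<or> desc (s ! q) y \<or> desc y (s ! q)"
      using q vps len nq by (auto simp: Rset_def)
    have "length s \<le> q \<or> desc (s ! q) v \<or> desc v (s ! q)"
      using q2
    proof (elim disjE)
      assume "desc (s ! q) y"
      then have "s ! q = y \<or> desc (s ! q) v" using desc_child_cases vy by blast
      then show ?thesis using vy(2) nth_mem by (metis not_le)
    next
      assume "desc y (s ! q)" then show ?thesis using vy by (meson converse_rtrancl_into_rtrancl)
    qed simp
    then show "q \<in> Rset i j s" using q1 vps by (simp add: Rset_def)
  qed
  have Pc: "Pf v - (if pen v then 1 else 0) \<le> Pf y" using P_child vV f vy v_def by simp
  have "expo i j s - (if pen v \<and> \<not> (children E v - {y} \<subseteq> set s) then 1 else 0) \<le> expo i j s'"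
  proof (cases "pen v \<and> children E v - {y} \<subseteq> set s")
    case False
    have "card (Rset i j s') \<le> card (Rset i j s)" using sub Rset_fin by (intro card_mono)
    then have "blk (card (Rset i j s')) \<le> blk (card (Rset i j s))" by (rule blk_mono)
    then show ?thesis using Pc False vps by (auto simp: expo_def)
  next
    case True
    define C where "C = children E v - {y}"
    define B where "B = {q. q < length s \<and> s ! q \<in> C}"
    have cardC: "D \<le> card C"
    proof -
      have "D + 1 \<le> card (children E v)" using pen_children vV f True v_def by simp
      moreover have "y \<in> children E v" using vy by (simp add: children_def)
      ultimately show ?thesis using fin_children vV by (simp add: C_def card_Diff_singleton)
    qed
    have inj: "inj_on (nth s) B" using cs by (auto simp: cinv_def B_def intro!: inj_on_nth)
    have img: "nth s ` B = C"
    proof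
      show "nth s ` B \<subseteq> C" by (auto simp: B_def)
      show "C \<subseteq> nth s ` B"
      proof
        fix c assume c: "c \<in> C"
        then have "c \<in> set s" using True by (auto simp: C_def)
        then obtain q where "q < length s" "s ! q = c" by (auto simp: in_set_conv_nth)
        then show "c \<in> nth s ` B" using c by (auto simp: B_def)
      qed
    qed
    have cardB: "card B = card C" using card_image[OF inj] img by simp
    have gensib: "(v, c) \<in> E \<Longrightarrow> gen c = gen y" for c using gen_edge vy by auto
    have vnot: "(v, v) \<notin> E" using gen_edge by force
    have BR: "B \<subseteq> Rset i j s"
    proof
      fix q assume q: "q \<in> B"
      then have ql: "q < length s" and sq: "(v, s ! q) \<in> E" "s ! q \<noteq> y" by (auto simp: B_def C_def children_def)
      have "q < n" using ql cs by (auto simp: cinv_def)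
      moreover have "q \<noteq> j" using sq vnot v_def by force
      moreover have "q \<noteq> i"
      proof
        assume "q = i"
        then have "desc y (s ! q)" using dy by simp
        moreover have "gen (s ! q) = gen y" using gensib sq by simp
        moreover have "y \<in> V" using E_V vy by blast
        ultimately have "y = s ! q" using desc_gen_eq[of y "s ! q"] by simp
        then show False using sq by simp
      qed
      ultimately show "q \<in> Rset i j s" using sq vps by (auto simp: Rset_def)
    qed
    have BR': "B \<inter> Rset i j s' = {}"
    proof (rule ccontr)
      assume "B \<inter> Rset i j s' \<noteq> {}"
      then obtain q where q: "q \<in> B" "q \<in> Rset i j s'" by blast
      then have ql: "q < length s" and sq: "(v, s ! q) \<in> E" "s ! q \<noteq> y" by (auto simp: B_def C_def children_def)
      have qj: "q \<noteq> j" using sq vnot v_def by force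
      have "desc (s ! q) y \<or> desc y (s ! q)" using q(2) ql qj nq vps len by (auto simp: Rset_def)
      moreover have "gen (s ! q) = gen y" using gensib sq by simp
      moreover have "s ! q \<in> V" "y \<in> V" using E_V sq vy by auto
      ultimately show False using desc_gen_eq[of y "s ! q"] desc_gen_eq[of "s ! q" y] sq by auto
    qed
    have "Rset i j s' \<subseteq> Rset i j s - B" using sub BR' by blast
    then have "card (Rset i j s') \<le> card (Rset i j s - B)" using Rset_fin by (intro card_mono) auto
    also have "\<dots> = card (Rset i j s) - card B" using BR Rset_fin by (intro card_Diff_subset) (auto intro: finite_subset)
    finally have cs1: "card (Rset i j s') \<le> card (Rset i j s) - card B" .
    have "card B \<le> card (Rset i j s)" using BR Rset_fin by (intro card_mono)
    then have "blk (card (Rset i j s) - card B) \<le> blk (card (Rset i j s)) - 1"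
      using blk_drop cardB cardC by simp
    moreover have "blk (card (Rset i j s')) \<le> blk (card (Rset i j s) - card B)" using cs1 blk_mono by blast
    ultimately show ?thesis using Pc True vps by (auto simp: expo_def)
  qed
  then show ?thesis by (simp add: v_def s'_def)
qed

lemma jmove_bound:
  assumes cs: "cinv s" and jl: "j < length s" and mv: "(j, y) \<in> moves E s"
    and f: "gen (s ! j) < m" and dy: "desc y (s ! i)"
  shows "gp i j (s[j := y]) \<le> Q powr (expo i j s - (if pen (s ! j) \<and> \<not> (children E (s ! j) - {y} \<subseteq> set s) then 1 else 0))"
proof -
  define s' where "s' = s[j := y]"
  note M = movesD[OF mv]
  have vV: "s ! j \<in> V" using cinv_nth_V[OF cs jl] by simp
  have gy: "gen y = Suc (gen (s ! j))" using gen_edge M by simp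
  have yV: "y \<in> V" using E_V M by blast
  have "bad i j s' \<Longrightarrow> expo i j s' \<le> 0"
  proof -
    assume "bad i j s'"
    then obtain x where x: "x \<in> V" "gen x = m" "desc x (s' ! j)" by (auto simp: bad_def)
    then have dxy: "desc x y" using jl by (simp add: s'_def)
    have "m \<le> gen y" using gen_desc[OF dxy x(1)] x(2) by simp
    then have "gen y = m" using gy f by simp
    then have "Pf y \<le> 0" using P_end yV by simp
    then show ?thesis using jl blk_nonneg[of "card (Rset i j s')"] by (simp add: expo_def vp_def s'_def)
  qed
  then have "gp i j s' \<le> Q powr expo i j s'" by (rule gp_le_Q)
  also have "\<dots> \<le> Q powr (expo i j s - (if pen (s ! j) \<and> \<not> (children E (s ! j) - {y} \<subseteq> set s) then 1 else 0))"
    using expo_jmove[OF assms] Q_anti by (simp add: s'_def)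
  finally show ?thesis by (simp add: s'_def)
qed

lemma jmove_off:
  assumes cs: "cinv s" and jl: "j < length s" and mv: "(j, y) \<in> moves E s"
    and f: "gen (s ! j) < m" and dy: "\<not> desc y (s ! i)"
  shows "gp i j (s[j := y]) = 0"
proof -
  note M = movesD[OF mv]
  have gy: "gen y = Suc (gen (s ! j))" using gen_edge M by simp
  have yV: "y \<in> V" using E_V M by blast
  have si: "s[j := y] ! i = s ! i" using ij by simp
  have "\<not> bad i j (s[j := y])"
  proof
    assume "bad i j (s[j := y])"
    then obtain x where x: "x \<in> V" "gen x = m" "desc x (s ! i)" "desc x y" using si jl by (auto simp: bad_def)
    then have "gen x \<le> gen y" using gen_desc[OF x(4) x(1)] by simp
    then have "gen x = gen y" using gy f x by simp
    then have "x = y" using desc_gen_eq x by blast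
    then show False using x dy by simp
  qed
  moreover have "\<not> follow i j (s[j := y])" using dy si jl by (auto simp: follow_def)
  ultimately show ?thesis by (simp add: gp_def)
qed

lemma dead_jmove:
  assumes cs: "cinv s" and jl: "j < length s" and mv: "(j, y) \<in> moves E s"
    and nb: "\<not> bad i j s" and nf: "\<not> follow i j s"
  shows "gp i j (s[j := y]) = 0"
proof -
  note M = movesD[OF mv]
  define u where "u = s ! i"
  define v where "v = s ! j"
  have vy: "(v, y) \<in> E" using M v_def by simp
  have gy: "gen y = Suc (gen v)" using gen_edge vy by simp
  have si: "s[j := y] ! i = u" using ij u_def by simp
  have sj: "s[j := y] ! j = y" using jl by simp
  have vu: "v \<noteq> u" using cs ij jl by (auto simp: cinv_def u_def v_def nth_eq_iff_index_eq)
  have nf': "\<not> (gen v < m \<and> desc v u \<and> v \<noteq> u)" using nf jl by (auto simp: follow_def u_def v_def)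
  have "\<not> bad i j (s[j := y])"
  proof
    assume "bad i j (s[j := y])"
    then obtain x where x: "x \<in> V" "gen x = m" "desc x u" "desc x y" using si sj by (auto simp: bad_def)
    then have "x = y \<or> desc x v" using desc_child_cases vy by blast
    then show False
    proof
      assume "x = y"
      then have "desc v u" using x vy by (meson converse_rtrancl_into_rtrancl)
      then show False using nf' vu gy x \<open>x = y\<close> by simp
    next
      assume "desc x v" then show False using nb x jl by (auto simp: bad_def u_def v_def)
    qed
  qed
  moreover have "\<not> follow i j (s[j := y])"
  proof
    assume "follow i j (s[j := y])"
    then have "gen y < m" "desc y u" using si sj jl by (auto simp: follow_def)
    then have "desc v u" using vy by (meson converse_rtrancl_into_rtrancl)
    then show False using nf' vu gy \<open>gen y < m\<close> by simp
  qed
  ultimately show ?thesis by (simp add: gp_def)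
qed

lemma wt_mv: "(p, y) \<in> moves E s \<Longrightarrow> wt s (p, y) = r (s ! p) y / (\<Sum>(j, z)\<in>moves E s. r (s ! j) z)"
  by (simp add: wt_def)

lemma gp_avg:
  assumes cs: "cinv s" and ne: "moves E s \<noteq> {}"
  shows "(\<Sum>x\<in>moves E s. wt s x * gp i j (s[fst x := snd x])) \<le> gp i j s"
proof (rule avg_le)
  show "finite (moves E s)" using moves_finite[OF cs] .
  show "\<forall>x\<in>moves E s. 0 \<le> wt s x" using wt_nonneg[OF cs] by blast
  show "sum (wt s) (moves E s) = 1" using wt_sum[OF cs ne] .
  show "0 \<le> gp i j s" by (rule gp_nonneg)
  let ?G = "\<lambda>x. gp i j (s[fst x := snd x])"
  have other: "?G x \<le> gp i j s" if "x \<in> moves E s" "fst x \<noteq> j" for x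
    using gp_other[OF cs, of "fst x" "snd x"] that by simp
  show "(\<forall>x\<in>moves E s. ?G x \<le> gp i j s) \<or>
    (\<exists>a\<in>moves E s. \<exists>b\<in>moves E s. a \<noteq> b \<and> wt s a * ?G a + wt s b * ?G b \<le> (wt s a + wt s b) * gp i j s \<and>
       (\<forall>x\<in>moves E s - {a, b}. ?G x \<le> gp i j s))"
  proof (cases "\<not> bad i j s \<and> j < length s \<and> follow i j s")
    case False
    have "?G x \<le> gp i j s" if x: "x \<in> moves E s" for x
    proof (cases "fst x = j")
      case False then show ?thesis using other x by blast
    next
      case True
      obtain y where xy: "x = (j, y)" using True by (cases x) auto
      have jl: "j < length s" using movesD x xy by blast
      have t: "trans s (s[j := y])" using x xy unfolding trans_def by force
      show ?thesis
      proof (cases "bad i j s")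
        case True
        then show ?thesis using bad_trans[OF cs t] xy by (simp add: gp_def)
      next
        case nb: False
        then have "\<not> follow i j s" using False jl by blast
        then show ?thesis using dead_jmove[OF cs jl _ nb] x xy gp_nonneg by simp
      qed
    qed
    then show ?thesis by blast
  next
    case True
    then have nb: "\<not> bad i j s" and jl: "j < length s" and fo: "follow i j s" by auto
    define u where "u = s ! i"
    define v where "v = s ! j"
    have f: "gen v < m" "desc v u" "v \<noteq> u" using fo jl by (auto simp: follow_def u_def v_def)
    have G0: "gp i j s = Q powr expo i j s" using nb fo by (simp add: gp_def)
    obtain cs' where c1: "(v, cs') \<in> E" "desc cs' u" using desc_step_first f by blast
    have jy: "?G (j, y) \<le> gp i j s" if y: "(j, y) \<in> moves E s" "y \<noteq> cs'" for y
    proof -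
      have "\<not> desc y u" using child_uniq c1 y movesD v_def by blast
      then show ?thesis using jmove_off[OF cs jl y(1)] f gp_nonneg u_def v_def by simp
    qed
    show ?thesis
    proof (cases "pen v \<and> (j, cs') \<in> moves E s \<and> (\<exists>c'. (v, c') \<in> E \<and> c' \<noteq> cs' \<and> c' \<notin> set s)")
      case False
      have "?G x \<le> gp i j s" if x: "x \<in> moves E s" for x
      proof (cases "fst x = j")
        case False then show ?thesis using other x by blast
      next
        case True
        obtain y where xy: "x = (j, y)" using True by (cases x) auto
        show ?thesis
        proof (cases "y = cs'")
          case yc: True
          have blocked: "\<not> (pen v \<and> \<not> (children E v - {y} \<subseteq> set s))"
            using \<open>\<not> (pen v \<and> _)\<close> x xy yc by (auto simp: children_def)
          have "?G x \<le> Q powr (expo i j s - (if pen (s ! j) \<and> \<not> (children E (s ! j) - {y} \<subseteq> set s) then 1 else 0))"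
            using jmove_bound[OF cs jl, of y] x xy yc c1 f u_def v_def by simp
          also have "\<dots> = gp i j s"
          proof -
            have "\<not> (pen (s ! j) \<and> \<not> (children E (s ! j) - {y} \<subseteq> set s))" using blocked v_def by simp
            then have z: "(if pen (s ! j) \<and> \<not> (children E (s ! j) - {y} \<subseteq> set s) then 1 else 0) = (0::int)"
              by (rule if_not_P)
            show ?thesis unfolding z using G0 by simp
          qed
          finally show ?thesis .
        next
          case False then show ?thesis using jy x xy by simp
        qed
      qed
      then show ?thesis by blast
    next
      case True
      then obtain c' where pv: "pen v" and a: "(j, cs') \<in> moves E s" and c': "(v, c') \<in> E" "c' \<noteq> cs'" "c' \<notin> set s"
        by blast
      have b: "(j, c') \<in> moves E s" using c' jl v_def by (simp add: moves_def)
      have Ga: "?G (j, cs') \<le> (1 + \<epsilon>) * gp i j s"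
      proof -
        have "?G (j, cs') \<le> Q powr (expo i j s - (if pen (s ! j) \<and> \<not> (children E (s ! j) - {cs'} \<subseteq> set s) then 1 else 0))"
          using jmove_bound[OF cs jl a] c1 f u_def v_def by simp
        also have "\<dots> \<le> Q powr (expo i j s - 1)" by (intro Q_anti) simp
        also have "\<dots> = (1 + \<epsilon>) * gp i j s" using Q_minus1 G0 by simp
        finally show ?thesis .
      qed
      have Gb: "?G (j, c') = 0"
      proof -
        have "\<not> desc c' u" using child_uniq c1 c' by blast
        then show ?thesis using jmove_off[OF cs jl b] f u_def v_def by simp
      qed
      let ?S = "\<Sum>(j, z)\<in>moves E s. r (s ! j) z"
      have Spos: "0 < ?S" using S_pos[OF cs ne] .
      have "\<epsilon> \<le> r v c' / r v cs'" using UE c' c1 by blast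
      moreover have "0 < r v cs'" using r_pos c1 by blast
      ultimately have "\<epsilon> * r v cs' \<le> r v c'" by (simp add: pos_le_divide_eq)
      then have "\<epsilon> * r v cs' / ?S \<le> r v c' / ?S" using Spos by (intro divide_right_mono) auto
      then have wab: "\<epsilon> * wt s (j, cs') \<le> wt s (j, c')" using wt_mv[OF a] wt_mv[OF b] v_def by simp
      have wa0: "0 \<le> wt s (j, cs')" using wt_nonneg[OF cs] by blast
      have g0: "0 \<le> gp i j s" by (rule gp_nonneg)
      have "wt s (j, cs') * ?G (j, cs') \<le> wt s (j, cs') * ((1 + \<epsilon>) * gp i j s)"
        using Ga wa0 by (intro mult_left_mono) auto
      moreover have "\<epsilon> * wt s (j, cs') * gp i j s \<le> wt s (j, c') * gp i j s"
        using wab g0 by (intro mult_right_mono) auto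
      ultimately have ineq: "wt s (j, cs') * ?G (j, cs') + wt s (j, c') * ?G (j, c') \<le> (wt s (j, cs') + wt s (j, c')) * gp i j s"
        using Gb by (simp add: algebra_simps)
      have rest: "\<forall>x\<in>moves E s - {(j, cs'), (j, c')}. ?G x \<le> gp i j s"
      proof
        fix x assume x: "x \<in> moves E s - {(j, cs'), (j, c')}"
        show "?G x \<le> gp i j s"
        proof (cases "fst x = j")
          case False then show ?thesis using other x by blast
        next
          case True
          obtain y where xy: "x = (j, y)" using True by (cases x) auto
          then show ?thesis using jy x by auto
        qed
      qed
      have "(j, cs') \<noteq> (j, c')" using c' by simp
      then show ?thesis using a b ineq rest by blast
    qed
  qed
qed

end
end



context tp begin

lemma step_int:
  assumes ij: "i < j" "j < n" and hi: "hinv h"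
  shows "(\<integral>\<^sup>+h'. ennreal (gp i j (hd h')) \<partial>measure_pmf (tasep_step E r rt n ins h)) \<le> ennreal (gp i j (hd h))"
proof -
  define s where "s = hd h"
  have cs: "cinv s" using hi by (simp add: hinv_def s_def)
  let ?p = "if length s < n \<and> rt \<notin> set s then ins h else 0"
  let ?B = "\<lambda>b. if b then return_pmf ((s @ [rt]) # h)
             else if moves E s = {} then return_pmf (s # h)
             else map_pmf (\<lambda>s'. s' # h) (move_pmf E r s)"
  have st: "tasep_step E r rt n ins h = bind_pmf (bernoulli_pmf ?p) ?B"
    unfolding tasep_step_def s_def Let_def by simp
  have br: "(\<integral>\<^sup>+h'. ennreal (gp i j (hd h')) \<partial>measure_pmf (?B b)) \<le> ennreal (gp i j s)"
    if b: "b \<in> set_pmf (bernoulli_pmf ?p)" for b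
  proof (cases b)
    case True
    have cond: "length s < n \<and> rt \<notin> set s"
    proof (rule ccontr)
      assume "\<not> (length s < n \<and> rt \<notin> set s)"
      then have "?p = 0" by (rule if_not_P)
      have "True \<in> set_pmf (bernoulli_pmf 0)" using b True \<open>?p = 0\<close> by metis
      moreover have "pmf (bernoulli_pmf 0) True = 0" by simp
      ultimately show False by (simp add: set_pmf_iff)
    qed
    have "gp i j (s @ [rt]) \<le> gp i j s" using gp_ins[OF ij cs] cond by blast
    then have "ennreal (gp i j (s @ [rt])) \<le> ennreal (gp i j s)" by (rule ennreal_leI)
    then show ?thesis using True by simp
  next
    case False
    show ?thesis
    proof (cases "moves E s = {}")
      case True then show ?thesis using False by simp
    next
      case ne: False
      have "(\<integral>\<^sup>+h'. ennreal (gp i j (hd h')) \<partial>measure_pmf (?B b))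
          = (\<integral>\<^sup>+x. ennreal (gp i j (s[fst x := snd x])) \<partial>measure_pmf (embed_pmf (wt s)))"
        using False ne by (simp add: move_pmf_wt split_beta)
      also have "\<dots> = (\<Sum>x\<in>moves E s. ennreal (gp i j (s[fst x := snd x])) * pmf (embed_pmf (wt s)) x)"
        using moves_finite[OF cs] set_wt[OF cs ne]
        by (intro nn_integral_measure_pmf_support) (auto simp: set_pmf_iff)
      also have "\<dots> = (\<Sum>x\<in>moves E s. ennreal (wt s x * gp i j (s[fst x := snd x])))"
        using pmf_wt[OF cs ne] wt_nonneg[OF cs] gp_nonneg
        by (intro sum.cong) (auto simp: ennreal_mult' mult.commute)
      also have "\<dots> = ennreal (\<Sum>x\<in>moves E s. wt s x * gp i j (s[fst x := snd x]))"
        using wt_nonneg[OF cs] gp_nonneg by (intro sum_ennreal) auto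
      also have "\<dots> \<le> ennreal (gp i j s)"
        using gp_avg[OF ij cs ne] by (rule ennreal_leI)
      finally show ?thesis .
    qed
  qed
  have "(\<integral>\<^sup>+h'. ennreal (gp i j (hd h')) \<partial>measure_pmf (tasep_step E r rt n ins h))
      = (\<integral>\<^sup>+b. (\<integral>\<^sup>+h'. ennreal (gp i j (hd h')) \<partial>measure_pmf (?B b)) \<partial>measure_pmf (bernoulli_pmf ?p))"
    unfolding st by (rule nn_integral_bind_pmf)
  also have "\<dots> \<le> (\<integral>\<^sup>+b. ennreal (gp i j s) \<partial>measure_pmf (bernoulli_pmf ?p))"
    using br by (intro nn_integral_mono_AE) (simp add: AE_measure_pmf_iff)
  also have "\<dots> = ennreal (gp i j s)" by (simp add: measure_pmf.emeasure_space_1)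
  finally show ?thesis by (simp add: s_def)
qed

lemma run_int:
  assumes ij: "i < j" "j < n"
  shows "(\<integral>\<^sup>+h. ennreal (gp i j (hd h)) \<partial>measure_pmf (tasep_run E r rt n ins N)) \<le> ennreal (gp i j [])"
proof (induction N)
  case 0 then show ?case by simp
next
  case (Suc N)
  have "(\<integral>\<^sup>+h. ennreal (gp i j (hd h)) \<partial>measure_pmf (tasep_run E r rt n ins (Suc N)))
     = (\<integral>\<^sup>+h0. (\<integral>\<^sup>+h. ennreal (gp i j (hd h)) \<partial>measure_pmf (tasep_step E r rt n ins h0)) \<partial>measure_pmf (tasep_run E r rt n ins N))"
    by simp
  also have "\<dots> \<le> (\<integral>\<^sup>+h0. ennreal (gp i j (hd h0)) \<partial>measure_pmf (tasep_run E r rt n ins N))"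
    using step_int[OF ij] run_hinv by (intro nn_integral_mono_AE) (simp add: AE_measure_pmf_iff)
  also have "\<dots> \<le> ennreal (gp i j [])" by (rule Suc.IH)
  finally show ?case .
qed

lemma prob_bad:
  assumes ij: "i < j" "j < n"
  shows "measure_pmf.prob (tasep_run E r rt n ins N) {h. bad i j (hd h)} \<le> Q powr (Pf rt - blk (n - 2))"
proof -
  let ?M = "measure_pmf (tasep_run E r rt n ins N)"
  have "emeasure ?M {h. bad i j (hd h)} = (\<integral>\<^sup>+h. indicator {h. bad i j (hd h)} h \<partial>?M)"
    by (simp add: nn_integral_indicator)
  also have "\<dots> \<le> (\<integral>\<^sup>+h. ennreal (gp i j (hd h)) \<partial>?M)"
    using gp_bad by (intro nn_integral_mono) (auto simp: indicator_def)
  also have "\<dots> \<le> ennreal (gp i j [])" by (rule run_int[OF ij])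
  finally have "ennreal (measure ?M {h. bad i j (hd h)}) \<le> ennreal (gp i j [])"
    by (simp add: measure_pmf.emeasure_eq_measure)
  then have "measure ?M {h. bad i j (hd h)} \<le> gp i j []"
    using gp_nonneg by (simp add: ennreal_le_iff)
  then show ?thesis using gp_init[OF ij] by simp
qed

lemma prob_not_dg:
  "measure_pmf.prob (tasep_run E r rt n ins N) {h. \<not> distinct_gen E rt n m h}
     \<le> real n ^ 2 * Q powr (Pf rt - blk (n - 2))"
proof -
  let ?M = "measure_pmf (tasep_run E r rt n ins N)"
  define P where "P = {(i, j). i < j \<and> j < n}"
  define A where "A = (\<lambda>ij. {h. bad (fst ij) (snd ij) (hd h)})"
  have finP: "finite P" by (rule finite_subset[of _ "{..<n} \<times> {..<n}"]) (auto simp: P_def)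
  have cardP: "card P \<le> n * n"
  proof -
    have "card P \<le> card ({..<n} \<times> {..<n})" by (rule card_mono) (auto simp: P_def)
    then show ?thesis by (simp add: card_cartesian_product)
  qed
  have sub: "{h. \<not> distinct_gen E rt n m h} \<inter> set_pmf (tasep_run E r rt n ins N) \<subseteq> (\<Union>ij\<in>P. A ij)"
  proof
    fix h assume h: "h \<in> {h. \<not> distinct_gen E rt n m h} \<inter> set_pmf (tasep_run E r rt n ins N)"
    then have hi: "hinv h" using run_hinv by blast
    from h obtain a b x where ab: "a < n" "b < n" "a \<noteq> b" "x \<in> Zgen E rt m" "visits h a x" "visits h b x"
      by (auto simp: distinct_gen_def)
    define i where "i = min a b"
    define j where "j = max a b"
    have ij: "i < j" "j < n" using ab by (auto simp: i_def j_def)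
    have vi: "visits h i x" "visits h j x" using ab by (auto simp: i_def j_def min_def max_def)
    have x: "x \<in> V" "gen x = m" using ab(4) by (auto simp: Zgen_eq Zg_def)
    have "j < length (hd h)" "desc x (hd h ! i)" "desc x (hd h ! j)" using hi vi by (auto simp: hinv_def)
    then have "bad i j (hd h)" using x by (auto simp: bad_def)
    then show "h \<in> (\<Union>ij\<in>P. A ij)" using ij by (auto simp: P_def A_def)
  qed
  have "measure ?M {h. \<not> distinct_gen E rt n m h}
      = measure ?M ({h. \<not> distinct_gen E rt n m h} \<inter> set_pmf (tasep_run E r rt n ins N))"
    by (simp add: measure_Int_set_pmf)
  also have "\<dots> \<le> measure ?M (\<Union>ij\<in>P. A ij)"
    using sub by (intro measure_pmf.finite_measure_mono) auto
  also have "\<dots> \<le> (\<Sum>ij\<in>P. measure ?M (A ij))"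
    using finP by (intro measure_pmf.finite_measure_subadditive_finite) auto
  also have "\<dots> \<le> (\<Sum>ij\<in>P. Q powr (Pf rt - blk (n - 2)))"
    using prob_bad by (intro sum_mono) (auto simp: P_def A_def)
  also have "\<dots> = real (card P) * Q powr (Pf rt - blk (n - 2))" by simp
  also have "\<dots> \<le> real n ^ 2 * Q powr (Pf rt - blk (n - 2))"
  proof (rule mult_right_mono)
    show "real (card P) \<le> real n ^ 2" using cardP by (simp add: power2_eq_square of_nat_mult[symmetric] del: of_nat_mult)
  qed (simp)
  finally show ?thesis .
qed

end


context tm begin

lemma child_uniq2: "(v, a) \<in> E \<Longrightarrow> (v, b) \<in> E \<Longrightarrow> desc a u \<Longrightarrow> desc b u \<Longrightarrow> a = b"
proof -
  assume a: "(v, a) \<in> E" "(v, b) \<in> E" "desc a u" "desc b u"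
  then have "desc a b \<or> desc b a" using anc_comparable by blast
  moreover have "gen a = gen b" using gen_edge a by simp
  moreover have "a \<in> V" "b \<in> V" using E_V a by auto
  ultimately show ?thesis using desc_gen_eq by metis
qed

lemma dmin_le: "x \<in> V \<Longrightarrow> dmin V E \<le> card (children E x)"
  unfolding dmin_def by (rule Least_le) blast

lemma dmin_ge1: "1 \<le> dmin V E"
proof -
  have "\<exists>x\<in>V. card (children E x) = dmin V E"
    unfolding dmin_def by (rule LeastI_ex) (use rt_V in blast)
  then obtain x where x: "x \<in> V" "card (children E x) = dmin V E" by blast
  have "children E x \<noteq> {}" using no_leaves x by blast
  then have "0 < card (children E x)" using fin_children[OF x(1)] card_gt_0_iff by blast
  then show ?thesis using x by simp
qed

lemma boundA:
  assumes d1: "dmin V E \<noteq> 1"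
  shows "measure_pmf.prob (tasep_run E r rt n ins N) {h. \<not> distinct_gen E rt n m h}
     \<le> real n ^ 2 * (1 / (1 + \<epsilon>)) powr real_of_int (Fn V E rt n m)"
proof -
  define D where "D = dmin V E - 1"
  have D1: "1 \<le> D" using dmin_ge1 d1 by (simp add: D_def)
  interpret A: tp V E rt r n \<epsilon> m "\<lambda>x. int m - int (gen x)" "\<lambda>a. int (a div D)" "\<lambda>x. True" D
  proof unfold_locales
    show "1 \<le> D" by (rule D1)
  next
    fix x c assume "x \<in> V" "gen x < m" "(x, c) \<in> E"
    then show "int m - int (gen x) - (if True then 1 else 0) \<le> int m - int (gen c)"
      using gen_edge by simp
  next
    fix x assume "x \<in> V" "gen x = m"
    then show "int m - int (gen x) \<le> 0" by simp
  next
    fix x assume "x \<in> V" "gen x < m" "True"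
    then show "D + 1 \<le> card (children E x)" using dmin_le dmin_ge1 by (simp add: D_def)
  next
    fix a b :: nat assume "a \<le> b"
    then show "int (a div D) \<le> int (b div D)" using div_le_mono by simp
  next
    fix a show "0 \<le> int (a div D)" by simp
  next
    fix t a :: nat assume ta: "D \<le> t" "t \<le> a"
    have "(a - t) div D \<le> (a - D) div D" using ta by (intro div_le_mono) simp
    moreover have "a div D = Suc ((a - D) div D)" using le_div_geq[of D a] D1 ta by simp
    ultimately show "int ((a - t) div D) \<le> int (a div D) - 1" by simp
  qed
  have b: "measure_pmf.prob (tasep_run E r rt n ins N) {h. \<not> distinct_gen E rt n m h}
     \<le> real n ^ 2 * A.Q powr (int m - int (gen rt) - int ((n - 2) div D))"
    by (rule A.prob_not_dg)
  have "int ((n - 2) div D) \<le> int (n div D)" by (simp add: div_le_mono)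
  also have "int (n div D) = \<lfloor>real n / real D\<rfloor>" by (simp add: floor_divide_of_nat_eq)
  also have "\<dots> \<le> \<lceil>real n / real D\<rceil>" by simp
  finally have le: "Fn V E rt n m \<le> int m - int (gen rt) - int ((n - 2) div D)"
    using d1 by (simp add: Fn_def D_def)
  have "A.Q powr (int m - int (gen rt) - int ((n - 2) div D)) \<le> A.Q powr (Fn V E rt n m)"
    using A.Q_anti[OF of_int_le_iff[THEN iffD2, OF le]] by simp
  then have "real n ^ 2 * A.Q powr (int m - int (gen rt) - int ((n - 2) div D))
      \<le> real n ^ 2 * A.Q powr (Fn V E rt n m)" by (intro mult_left_mono) auto
  with b show ?thesis by (simp add: A.Q_def)
qed

lemma boundB:
  assumes d1: "dmin V E = 1"
  shows "measure_pmf.prob (tasep_run E r rt n ins N) {h. \<not> distinct_gen E rt n m h}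
     \<le> real n ^ 2 * (1 / (1 + \<epsilon>)) powr real_of_int (Fn V E rt n m)"
proof -
  define pen where "pen z = (3 \<le> udeg E rt z)" for z
  define cnt where "cnt x y = card {z. desc x z \<and> desc z y \<and> z \<noteq> y \<and> pen z}" for x y
  define Pf where "Pf x = int (Inf {cnt x y | y. y \<in> Zg m \<and> desc x y})" for x
  have cnt_fin: "finite {z. desc x z \<and> desc z y \<and> z \<noteq> y \<and> pen z}" for x y
    by (rule finite_subset[OF _ anc_finite[of y]]) auto
  have Pf_mem: "\<exists>y\<in>Zg m. desc x y \<and> Pf x = int (cnt x y)" if "x \<in> V" "gen x \<le> m" for x
  proof -
    have "{cnt x y | y. y \<in> Zg m \<and> desc x y} \<noteq> {}" using desc_in_Zg that by blast
    then have "Inf {cnt x y | y. y \<in> Zg m \<and> desc x y} \<in> {cnt x y | y. y \<in> Zg m \<and> desc x y}"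
      by (rule Inf_nat_def1)
    then show ?thesis by (auto simp: Pf_def)
  qed
  have Pf_le: "Pf x \<le> int (cnt x y)" if "y \<in> Zg m" "desc x y" for x y
  proof -
    have "Inf {cnt x y | y. y \<in> Zg m \<and> desc x y} \<le> cnt x y"
      using that by (intro cInf_lower) auto
    then show ?thesis by (simp add: Pf_def)
  qed
  interpret B: tp V E rt r n \<epsilon> m Pf "\<lambda>a. int a" pen 1
  proof unfold_locales
    show "1 \<le> (1::nat)" by simp
  next
    fix x c assume x: "x \<in> V" "gen x < m" "(x, c) \<in> E"
    have cV: "c \<in> V" "gen c \<le> m" using E_V x gen_edge by auto
    obtain y0 where y0: "y0 \<in> Zg m" "desc c y0" "Pf c = int (cnt c y0)" using Pf_mem[OF cV] by blast
    have dxy: "desc x y0" using x y0 by (meson converse_rtrancl_into_rtrancl)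
    define A where "A = {z. desc c z \<and> desc z y0 \<and> z \<noteq> y0 \<and> pen z}"
    have sub: "{z. desc x z \<and> desc z y0 \<and> z \<noteq> y0 \<and> pen z} \<subseteq> (if pen x then insert x A else A)"
    proof
      fix z assume z: "z \<in> {z. desc x z \<and> desc z y0 \<and> z \<noteq> y0 \<and> pen z}"
      show "z \<in> (if pen x then insert x A else A)"
      proof (cases "z = x")
        case True then show ?thesis using z by auto
      next
        case False
        have zz: "desc x z" "desc z y0" "z \<noteq> y0" "pen z" using z by auto
        have "x \<noteq> z" using False by simp
        then obtain c' where c': "(x, c') \<in> E" "desc c' z" using desc_step_first[OF zz(1)] by blast
        have "desc c' y0" using rtrancl_trans[OF c'(2) zz(2)] .
        then have "c' = c" using child_uniq2[OF c'(1) x(3) _ y0(2)] by simp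
        then have "z \<in> A" using c' zz by (auto simp: A_def)
        then show ?thesis by auto
      qed
    qed
    have finA: "finite A" unfolding A_def by (rule cnt_fin)
    have "cnt x y0 \<le> card (if pen x then insert x A else A)"
      unfolding cnt_def using sub finA by (intro card_mono) auto
    also have "\<dots> \<le> cnt c y0 + (if pen x then 1 else 0)"
      using finA by (auto simp: cnt_def A_def card_insert_if)
    finally have "cnt x y0 \<le> cnt c y0 + (if pen x then 1 else 0)" .
    moreover have "Pf x \<le> int (cnt x y0)" using Pf_le y0 dxy by blast
    ultimately show "Pf x - (if pen x then 1 else 0) \<le> Pf c" using y0 by (auto split: if_splits)
  next
    fix x assume x: "x \<in> V" "gen x = m"
    then have "x \<in> Zg m" by (simp add: Zg_def)
    then have "Pf x \<le> int (cnt x x)" using Pf_le by blast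
    moreover have "{z. desc x z \<and> desc z x \<and> z \<noteq> x \<and> pen z} = {}"
      using desc_antisym x by blast
    ultimately show "Pf x \<le> 0" by (simp add: cnt_def)
  next
    fix x assume "x \<in> V" "gen x < m" "pen x"
    then show "1 + 1 \<le> card (children E x)" by (auto simp: pen_def udeg_def split: if_splits)
  next
    fix a b :: nat assume "a \<le> b" then show "int a \<le> int b" by simp
  next
    fix a :: nat show "0 \<le> int a" by simp
  next
    fix t a :: nat assume "1 \<le> t" "t \<le> a" then show "int (a - t) \<le> int a - 1" by simp
  qed
  have b: "measure_pmf.prob (tasep_run E r rt n ins N) {h. \<not> distinct_gen E rt n m h}
     \<le> real n ^ 2 * B.Q powr (Pf rt - int (n - 2))"
    by (rule B.prob_not_dg)
  obtain y0 where y0: "y0 \<in> Zg m" "desc rt y0" "Pf rt = int (cnt rt y0)" using Pf_mem rt_V by fastforce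
  have "Fbr E rt y0 = cnt rt y0"
    unfolding Fbr_def cnt_def path_set_def pen_def by (rule arg_cong[where f = card]) auto
  then have "Min (Fbr E rt ` Zgen E rt m) \<le> cnt rt y0"
    using y0 Zg_finite by (intro Min_le) (auto simp: Zgen_eq intro!: image_eqI[where x = y0])
  then have le: "Fn V E rt n m \<le> Pf rt - int (n - 2)" using d1 y0 by (simp add: Fn_def)
  have "B.Q powr (Pf rt - int (n - 2)) \<le> B.Q powr (Fn V E rt n m)"
    using B.Q_anti[OF of_int_le_iff[THEN iffD2, OF le]] by simp
  then have "real n ^ 2 * B.Q powr (Pf rt - int (n - 2))
      \<le> real n ^ 2 * B.Q powr (Fn V E rt n m)" by (intro mult_left_mono) auto
  with b show ?thesis by (simp add: B.Q_def)
qed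

end

theorem mainTheorem9:
  fixes V :: "'v set" and E :: "('v \<times> 'v) set" and rt :: 'v
    and r :: "'v \<Rightarrow> 'v \<Rightarrow> real" and \<epsilon> :: real and n m N :: nat
    and ins :: "'v list list \<Rightarrow> real"
  assumes tree: "rooted_tree V E rt"
    and no_leaves: "\<forall>x\<in>V. children E x \<noteq> {}"
    and rates_pos: "\<forall>(x, y)\<in>E. r x y > 0"
    and rates_bdd: "\<exists>R. \<forall>(x, y)\<in>E. r x y \<le> R"
    and eps: "0 < \<epsilon>" "\<epsilon> \<le> 1"
    and UE: "\<forall>x y z. (x, y) \<in> E \<longrightarrow> (x, z) \<in> E \<longrightarrow> r x y / r x z \<ge> \<epsilon>"
  shows "measure_pmf.prob (tasep_run E r rt n ins N) {h. distinct_gen E rt n m h}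
           \<ge> 1 - real n ^ 2 * (1 / (1 + \<epsilon>)) powr real_of_int (Fn V E rt n m)"
proof -
  interpret tm V E rt r n \<epsilon>
    by unfold_locales (use tree no_leaves rates_pos eps UE in auto)
  have bnd: "measure_pmf.prob (tasep_run E r rt n ins N) {h. \<not> distinct_gen E rt n m h}
     \<le> real n ^ 2 * (1 / (1 + \<epsilon>)) powr real_of_int (Fn V E rt n m)"
    using boundA boundB by blast
  have "{h. distinct_gen E rt n m h} = space (measure_pmf (tasep_run E r rt n ins N)) - {h. \<not> distinct_gen E rt n m h}"
    by auto
  then have "measure_pmf.prob (tasep_run E r rt n ins N) {h. distinct_gen E rt n m h}
      = 1 - measure_pmf.prob (tasep_run E r rt n ins N) {h. \<not> distinct_gen E rt n m h}"
    using measure_pmf.prob_compl by simp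
  with bnd show ?thesis by simp
qed

end
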